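(* Let $A$ be a locally-complex Cayley--Dickson algebra and $f(x)\in A[x]$. Then every root in $A$ of $f'(x)$ is contained in the Gauss--Lucas snail $\mathrm{sn}(f)$.
   Context: Real Cayley--Dickson algebras: $A_0=\mathbb{R}$ with identity involution, $A_{k+1}=A_k\{\gamma_k\}=A_k\times A_k$ with product $(a,b)(c,d)=(ac+\gamma_k\bar d b,\ da+b\bar c)$ and involution $\overline{(a,b)}=(\bar a,-b)$. A real unital algebra is locally-complex if every non-real element generates a subalgebra isomorphic to $\mathbb{C}$ (for Cayley--Dickson algebras: all $\gamma_k=-1$ up to isomorphism). Trace $\mathrm{tr}(\lambda)=\lambda+\bar\lambda$, norm $\mathrm{n}(\lambda)=\bar\lambda\lambda$; $\langle\cdot,\cdot\rangle$ is the Euclidean inner product with $\langle a,a\rangle=\mathrm{n}(a)$. For $I$ with trace $0$ and norm $1$, $\mathbb{C}_I=\mathbb{R}+\mathbb{R}I\cong\mathbb{C}$ and $\pi_I:A\to\mathbb{C}_I$ is the orthogonal projection. $A[x]=A\otimes_{\mathbb{R}}\mathbb{R}[x]$ with central $x$; for $f(x)=\sum_k a_kx^k$, $f_I(x)=\sum_k\pi_I(a_k)x^k\in\mathbb{C}_I[x]$; substitution $f(r)=\sum_k a_k(r^k)$; formal derivative $f'(x)=\sum_k ka_kx^{k-1}$. If $f_I$ is non-constant, $K_{\mathbb{C}_I}(f_I)$ is the convex hull in $\mathbb{C}_I$ of the roots of $f_I$ in $\mathbb{C}_I$; otherwise $K_{\mathbb{C}_I}(f_I)=\mathbb{C}_I$.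 The Gauss--Lucas snail is $\mathrm{sn}(f)=\bigcup_I K_{\mathbb{C}_I}(f_I)$, the union over all $I\in A$ with $\mathrm{tr}(I)=0$, $\mathrm{n}(I)=1$. *)

theory Defs
  imports "HOL-Analysis.Analysis" "HOL-Computational_Algebra.Polynomial"
begin

text \<open>The locally-complex Cayley--Dickson algebra A_n (all gamma_k = -1) of real dimension 2^n.
  Elements are real lists of length 2^n; an element of A_(n+1) is the concatenation a @ b
  of its two halves a, b in A_n.\<close>

definition cd_carrier :: "nat \<Rightarrow> real list set" where
  "cd_carrier n = {xs. length xs = 2 ^ n}"

definition cd_add :: "real list \<Rightarrow> real list \<Rightarrow> real list" where
  "cd_add xs ys = map2 (+) xs ys"

definition cd_neg :: "real list \<Rightarrow> real list" where
  "cd_neg xs = map uminus xs"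

definition cd_scale :: "real \<Rightarrow> real list \<Rightarrow> real list" where
  "cd_scale r xs = map ((*) r) xs"

definition cd_zero :: "nat \<Rightarrow> real list" where
  "cd_zero n = replicate (2 ^ n) 0"

definition cd_one :: "nat \<Rightarrow> real list" where
  "cd_one n = 1 # replicate (2 ^ n - 1) 0"

fun cd_conj :: "nat \<Rightarrow> real list \<Rightarrow> real list" where
  "cd_conj 0 xs = xs"
| "cd_conj (Suc n) xs = cd_conj n (take (2 ^ n) xs) @ cd_neg (drop (2 ^ n) xs)"

text \<open>Product: (a,b)(c,d) = (ac + gamma conj(d) b, da + b conj(c)) with gamma = -1.\<close>
fun cd_mult :: "nat \<Rightarrow> real list \<Rightarrow> real list \<Rightarrow> real list" where
  "cd_mult 0 xs ys = [hd xs * hd ys]"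
| "cd_mult (Suc n) xs ys =
     (let a = take (2 ^ n) xs; b = drop (2 ^ n) xs;
          c = take (2 ^ n) ys; d = drop (2 ^ n) ys
      in cd_add (cd_mult n a c) (cd_neg (cd_mult n (cd_conj n d) b))
         @ cd_add (cd_mult n d a) (cd_mult n b (cd_conj n c)))"

text \<open>Euclidean inner product (coordinatewise), satisfying <a,a> = n(a).\<close>
definition cd_inner :: "real list \<Rightarrow> real list \<Rightarrow> real" where
  "cd_inner xs ys = sum_list (map2 (*) xs ys)"

definition cd_trace :: "nat \<Rightarrow> real list \<Rightarrow> real list" where
  "cd_trace n x = cd_add x (cd_conj n x)"

definition cd_norm :: "nat \<Rightarrow> real list \<Rightarrow> real list" where
  "cd_norm n x = cd_mult n (cd_conj n x) x"

definition cd_units :: "nat \<Rightarrow> real list set" where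
  "cd_units n = {I \<in> cd_carrier n. cd_trace n I = cd_zero n \<and> cd_norm n I = cd_one n}"

text \<open>Powers r^k (A is power-associative).\<close>
fun cd_pow :: "nat \<Rightarrow> real list \<Rightarrow> nat \<Rightarrow> real list" where
  "cd_pow n r 0 = cd_one n"
| "cd_pow n r (Suc k) = cd_mult n r (cd_pow n r k)"

text \<open>Polynomials in A[x]: coefficient lists [a_0, a_1, ...]; substitution f(r) = sum a_k (r^k).\<close>
definition cd_eval :: "nat \<Rightarrow> real list list \<Rightarrow> real list \<Rightarrow> real list" where
  "cd_eval n fs r =
     foldr cd_add (map (\<lambda>k. cd_mult n (fs ! k) (cd_pow n r k)) [0..<length fs]) (cd_zero n)"

definition cd_pderiv :: "real list list \<Rightarrow> real list list" where
  "cd_pderiv fs = map (\<lambda>k. cd_scale (real k) (fs ! k)) [1..<length fs]"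

definition cd_embed :: "nat \<Rightarrow> real list \<Rightarrow> complex \<Rightarrow> real list" where
  "cd_embed n I z = cd_add (cd_scale (Re z) (cd_one n)) (cd_scale (Im z) I)"

text \<open>Orthogonal projection pi_I onto C_I = span{1, I} (1, I orthonormal), expressed through
  the identification: pi_I(a) = cd_embed n I (Complex <a,1> <a,I>).\<close>
definition cd_proj_coord :: "nat \<Rightarrow> real list \<Rightarrow> real list \<Rightarrow> complex" where
  "cd_proj_coord n I a = Complex (cd_inner a (cd_one n)) (cd_inner a I)"

text \<open>f_I in C_I[x], transported to complex[x].\<close>
definition cd_fI :: "nat \<Rightarrow> real list \<Rightarrow> real list list \<Rightarrow> complex poly" where
  "cd_fI n I fs = Poly (map (cd_proj_coord n I) fs)"

definition cd_K :: "nat \<Rightarrow> real list \<Rightarrow> real list list \<Rightarrow> real list set" where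
  "cd_K n I fs =
     (if degree (cd_fI n I fs) > 0
      then cd_embed n I ` (convex hull {z. poly (cd_fI n I fs) z = 0})
      else cd_embed n I ` UNIV)"

definition cd_snail :: "nat \<Rightarrow> real list list \<Rightarrow> real list set" where
  "cd_snail n fs = (\<Union>I \<in> cd_units n. cd_K n I fs)"

end

theory Submission
  imports Defs "HOL-Computational_Algebra.Fundamental_Theorem_Algebra"
begin

lemma len_add[simp]: "length (cd_add x y) = min (length x) (length y)" by (simp add: cd_add_def)
lemma len_neg[simp]: "length (cd_neg x) = length x" by (simp add: cd_neg_def)
lemma len_scale[simp]: "length (cd_scale c x) = length x" by (simp add: cd_scale_def)
lemma len_mult[simp]: "length (cd_mult n x y) = 2^n"
  by (induction n arbitrary: x y) (simp_all add: Let_def)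
lemma len_conj[simp]: "length x = 2^n \<Longrightarrow> length (cd_conj n x) = 2^n"
  by (induction n arbitrary: x) simp_all
lemma len_zero[simp]: "length (cd_zero n) = 2^n" by (simp add: cd_zero_def)
lemma len_one[simp]: "length (cd_one n) = 2^n" by (simp add: cd_one_def)

lemma nth_add[simp]: "i < length x \<Longrightarrow> i < length y \<Longrightarrow> cd_add x y ! i = x!i + y!i"
  by (simp add: cd_add_def)
lemma nth_neg[simp]: "i < length x \<Longrightarrow> cd_neg x ! i = - (x!i)"
  by (simp add: cd_neg_def)
lemma nth_scale[simp]: "i < length x \<Longrightarrow> cd_scale c x ! i = c * (x!i)"
  by (simp add: cd_scale_def)
lemma nth_zero[simp]: "i < 2^n \<Longrightarrow> cd_zero n ! i = 0"
  by (simp add: cd_zero_def)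

lemma add_append[simp]: "length a = length c \<Longrightarrow> cd_add (a@b) (c@d) = cd_add a c @ cd_add b d"
  by (simp add: cd_add_def)
lemma neg_append[simp]: "cd_neg (a@b) = cd_neg a @ cd_neg b" by (simp add: cd_neg_def)
lemma scale_append[simp]: "cd_scale c (a@b) = cd_scale c a @ cd_scale c b" by (simp add: cd_scale_def)
lemma conj_Suc[simp]: "length a = 2^n \<Longrightarrow> cd_conj (Suc n) (a@b) = cd_conj n a @ cd_neg b"
  by simp
lemma mult_Suc[simp]: "length a = 2^n \<Longrightarrow> length c = 2^n \<Longrightarrow>
  cd_mult (Suc n) (a@b) (c@d) = cd_add (cd_mult n a c) (cd_neg (cd_mult n (cd_conj n d) b))
         @ cd_add (cd_mult n d a) (cd_mult n b (cd_conj n c))"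
  by (simp add: Let_def)
lemma zero_Suc: "cd_zero (Suc n) = cd_zero n @ cd_zero n"
  by (simp add: cd_zero_def replicate_add[symmetric] mult_2)
lemma one_Suc: "cd_one (Suc n) = cd_one n @ cd_zero n"
proof -
  have e: "(2::nat)^Suc n - 1 = (2^n - 1) + 2^n" by simp
  show ?thesis by (simp only: cd_one_def cd_zero_def e replicate_add) simp
qed

lemma split_Suc:
  assumes "length x = 2^Suc n"
  obtains a b where "x = a @ b" "length a = 2^n" "length b = 2^n"
proof
  show "x = take (2^n) x @ drop (2^n) x" by simp
  show "length (take (2^n) x) = 2^n" using assms by simp
  show "length (drop (2^n) x) = 2^n" using assms by simp
qed

lemma len1: "length x = 1 \<Longrightarrow> x = [hd x]"
  by (cases x) auto

lemma hd_add: "x \<noteq> [] \<Longrightarrow> y \<noteq> [] \<Longrightarrow> hd (cd_add x y) = hd x + hd y"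
  by (cases x; cases y) (auto simp: cd_add_def)
lemma hd_neg: "x \<noteq> [] \<Longrightarrow> hd (cd_neg x) = - hd x"
  by (cases x) (auto simp: cd_neg_def)
lemma hd_scale: "x \<noteq> [] \<Longrightarrow> hd (cd_scale c x) = c * hd x"
  by (cases x) (auto simp: cd_scale_def)

lemma neg_neg[simp]: "cd_neg (cd_neg x) = x"
  by (simp add: cd_neg_def comp_def)
lemma neg_scale: "cd_neg x = cd_scale (-1) x"
  by (simp add: cd_neg_def cd_scale_def)

lemma conj_lin:
  "\<forall>x y. length x = 2^n \<and> length y = 2^n \<longrightarrow>
     cd_conj n (cd_add x y) = cd_add (cd_conj n x) (cd_conj n y) \<and>
     (\<forall>c. cd_conj n (cd_scale c x) = cd_scale c (cd_conj n x)) \<and>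
     cd_conj n (cd_conj n x) = x"
proof (induction n)
  case 0
  then show ?case by simp
next
  case (Suc n)
  show ?case
  proof (intro allI impI)
    fix x y :: "real list"
    assume "length x = 2^Suc n \<and> length y = 2^Suc n"
    then obtain a b c d where x: "x = a@b" and y: "y = c@d" and l: "length a = 2^n" "length b = 2^n"
       "length c = 2^n" "length d = 2^n"
      by (metis split_Suc)
    show "cd_conj (Suc n) (cd_add x y) = cd_add (cd_conj (Suc n) x) (cd_conj (Suc n) y) \<and>
     (\<forall>c. cd_conj (Suc n) (cd_scale c x) = cd_scale c (cd_conj (Suc n) x)) \<and>
     cd_conj (Suc n) (cd_conj (Suc n) x) = x"
      using Suc.IH l unfolding x y
      by (auto intro!: nth_equalityI)
  qed
qed

lemma conj_add[simp]: "length x = 2^n \<Longrightarrow> length y = 2^n \<Longrightarrow>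
   cd_conj n (cd_add x y) = cd_add (cd_conj n x) (cd_conj n y)" using conj_lin by blast
lemma conj_scale[simp]: "length x = 2^n \<Longrightarrow> cd_conj n (cd_scale c x) = cd_scale c (cd_conj n x)"
  using conj_lin by blast
lemma conj_conj[simp]: "length x = 2^n \<Longrightarrow> cd_conj n (cd_conj n x) = x"
  using conj_lin by blast
lemma conj_neg[simp]: "length x = 2^n \<Longrightarrow> cd_conj n (cd_neg x) = cd_neg (cd_conj n x)"
  by (simp add: neg_scale)

lemma bilin:
  "\<forall>x y z. length x = 2^n \<and> length y = 2^n \<and> length z = 2^n \<longrightarrow>
     cd_mult n (cd_add x y) z = cd_add (cd_mult n x z) (cd_mult n y z) \<and>
     cd_mult n x (cd_add y z) = cd_add (cd_mult n x y) (cd_mult n x z) \<and>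
     (\<forall>c. cd_mult n (cd_scale c x) y = cd_scale c (cd_mult n x y) \<and>
          cd_mult n x (cd_scale c y) = cd_scale c (cd_mult n x y))"
proof (induction n)
  case 0
  show ?case
  proof (intro allI impI)
    fix x y z :: "real list"
    assume "length x = 2^0 \<and> length y = 2^0 \<and> length z = 2^0"
    then have "x = [hd x]" "y = [hd y]" "z = [hd z]" using len1 by auto
    then obtain p q r where "x = [p]" "y = [q]" "z = [r]" by blast
    then show "cd_mult 0 (cd_add x y) z = cd_add (cd_mult 0 x z) (cd_mult 0 y z) \<and>
     cd_mult 0 x (cd_add y z) = cd_add (cd_mult 0 x y) (cd_mult 0 x z) \<and>
     (\<forall>c. cd_mult 0 (cd_scale c x) y = cd_scale c (cd_mult 0 x y) \<and>
          cd_mult 0 x (cd_scale c y) = cd_scale c (cd_mult 0 x y))"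
      by (simp add: cd_add_def cd_scale_def algebra_simps)
  qed
next
  case (Suc n)
  have IH1: "\<And>x y z. length x = 2^n \<Longrightarrow> length y = 2^n \<Longrightarrow> length z = 2^n \<Longrightarrow>
     cd_mult n (cd_add x y) z = cd_add (cd_mult n x z) (cd_mult n y z)"
   and IH2: "\<And>x y z. length x = 2^n \<Longrightarrow> length y = 2^n \<Longrightarrow> length z = 2^n \<Longrightarrow>
     cd_mult n x (cd_add y z) = cd_add (cd_mult n x y) (cd_mult n x z)"
   and IH3: "\<And>x y c. length x = 2^n \<Longrightarrow> length y = 2^n \<Longrightarrow>
     cd_mult n (cd_scale c x) y = cd_scale c (cd_mult n x y)"
   and IH4: "\<And>x y c. length x = 2^n \<Longrightarrow> length y = 2^n \<Longrightarrow>
     cd_mult n x (cd_scale c y) = cd_scale c (cd_mult n x y)"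
    using Suc.IH by blast+
  show ?case
  proof (intro allI impI)
    fix x y z :: "real list"
    assume "length x = 2^Suc n \<and> length y = 2^Suc n \<and> length z = 2^Suc n"
    then have lx: "length x = 2^Suc n" and ly: "length y = 2^Suc n" and lz: "length z = 2^Suc n" by auto
    obtain a b where x: "x = a@b" and la: "length a = 2^n" "length b = 2^n"
      using split_Suc[OF lx] by blast
    obtain c d where y: "y = c@d" and lc: "length c = 2^n" "length d = 2^n"
      using split_Suc[OF ly] by blast
    obtain e f where z: "z = e@f" and le: "length e = 2^n" "length f = 2^n"
      using split_Suc[OF lz] by blast
    note l = la lc le
    have 1: "cd_mult (Suc n) (cd_add x y) z = cd_add (cd_mult (Suc n) x z) (cd_mult (Suc n) y z)"
      using l unfolding x y z
      by (simp add: IH1 IH2 IH3 IH4, intro conjI nth_equalityI, simp_all add: algebra_simps)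
    have 2: "cd_mult (Suc n) x (cd_add y z) = cd_add (cd_mult (Suc n) x y) (cd_mult (Suc n) x z)"
      using l unfolding x y z
      by (simp add: IH1 IH2 IH3 IH4, intro conjI nth_equalityI, simp_all add: algebra_simps)
    have 3: "cd_mult (Suc n) (cd_scale k x) y = cd_scale k (cd_mult (Suc n) x y)" for k
      using l unfolding x y z
      by (simp add: IH1 IH2 IH3 IH4, intro conjI nth_equalityI, simp_all add: algebra_simps)
    have 4: "cd_mult (Suc n) x (cd_scale k y) = cd_scale k (cd_mult (Suc n) x y)" for k
      using l unfolding x y z
      by (simp add: IH1 IH2 IH3 IH4, intro conjI nth_equalityI, simp_all add: algebra_simps)
    show "cd_mult (Suc n) (cd_add x y) z = cd_add (cd_mult (Suc n) x z) (cd_mult (Suc n) y z) \<and>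
     cd_mult (Suc n) x (cd_add y z) = cd_add (cd_mult (Suc n) x y) (cd_mult (Suc n) x z) \<and>
     (\<forall>k. cd_mult (Suc n) (cd_scale k x) y = cd_scale k (cd_mult (Suc n) x y) \<and>
          cd_mult (Suc n) x (cd_scale k y) = cd_scale k (cd_mult (Suc n) x y))"
      using 1 2 3 4 by blast
  qed
qed

lemma mult_add_left[simp]: "length x = 2^n \<Longrightarrow> length y = 2^n \<Longrightarrow> length z = 2^n \<Longrightarrow>
  cd_mult n (cd_add x y) z = cd_add (cd_mult n x z) (cd_mult n y z)" using bilin by blast
lemma mult_add_right[simp]: "length x = 2^n \<Longrightarrow> length y = 2^n \<Longrightarrow> length z = 2^n \<Longrightarrow>
  cd_mult n x (cd_add y z) = cd_add (cd_mult n x y) (cd_mult n x z)" using bilin by blast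
lemma mult_scale_left[simp]: "length x = 2^n \<Longrightarrow> length y = 2^n \<Longrightarrow>
  cd_mult n (cd_scale c x) y = cd_scale c (cd_mult n x y)" using bilin by blast
lemma mult_scale_right[simp]: "length x = 2^n \<Longrightarrow> length y = 2^n \<Longrightarrow>
  cd_mult n x (cd_scale c y) = cd_scale c (cd_mult n x y)" using bilin by blast
lemma mult_neg_left[simp]: "length x = 2^n \<Longrightarrow> length y = 2^n \<Longrightarrow>
  cd_mult n (cd_neg x) y = cd_neg (cd_mult n x y)" by (simp add: neg_scale)
lemma mult_neg_right[simp]: "length x = 2^n \<Longrightarrow> length y = 2^n \<Longrightarrow>
  cd_mult n x (cd_neg y) = cd_neg (cd_mult n x y)" by (simp add: neg_scale)

lemma zero_scale: "length x = 2^n \<Longrightarrow> cd_zero n = cd_scale 0 x"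
  by (intro nth_equalityI) simp_all
lemma mult_zero_left[simp]: "length y = 2^n \<Longrightarrow> cd_mult n (cd_zero n) y = cd_zero n"
  using zero_scale[of y n] mult_scale_left[of y n y 0] zero_scale[of "cd_mult n y y" n] by simp
lemma mult_zero_right[simp]: "length y = 2^n \<Longrightarrow> cd_mult n y (cd_zero n) = cd_zero n"
  using zero_scale[of y n] mult_scale_right[of y n y 0] zero_scale[of "cd_mult n y y" n] by simp
lemma conj_zero[simp]: "cd_conj n (cd_zero n) = cd_zero n"
  using zero_scale[of "cd_zero n" n] conj_scale[of "cd_zero n" n 0] by (metis len_conj len_zero zero_scale)
lemma neg_zero[simp]: "cd_neg (cd_zero n) = cd_zero n"
  by (intro nth_equalityI) simp_all
lemma nth_one: "i < 2^n \<Longrightarrow> cd_one n ! i = (if i = 0 then 1 else 0)"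
  by (simp add: cd_one_def nth_Cons')
lemma one0: "cd_one 0 = [1]" by (simp add: cd_one_def)

lemma conj_one[simp]: "cd_conj n (cd_one n) = cd_one n"
  by (induction n) (simp_all add: one0 one_Suc)

lemma mult_one:
  "\<forall>x. length x = 2^n \<longrightarrow> cd_mult n (cd_one n) x = x \<and> cd_mult n x (cd_one n) = x"
proof (induction n)
  case 0
  show ?case
  proof (intro allI impI)
    fix x :: "real list"
    assume "length x = 2^0"
    then have "x = [hd x]" using len1 by auto
    then obtain p where "x = [p]" by blast
    then show "cd_mult 0 (cd_one 0) x = x \<and> cd_mult 0 x (cd_one 0) = x" by (simp add: one0)
  qed
next
  case (Suc n)
  show ?case
  proof (intro allI impI)
    fix x :: "real list"
    assume lx: "length x = 2^Suc n"
    obtain a b where x: "x = a@b" and la: "length a = 2^n" "length b = 2^n"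
      using split_Suc[OF lx] by blast
    show "cd_mult (Suc n) (cd_one (Suc n)) x = x \<and> cd_mult (Suc n) x (cd_one (Suc n)) = x"
      using la Suc.IH unfolding x one_Suc
      by (simp add: Let_def, intro conjI nth_equalityI, simp_all add: nth_append)
  qed
qed
lemma mult_one_left[simp]: "length x = 2^n \<Longrightarrow> cd_mult n (cd_one n) x = x" using mult_one by blast
lemma mult_one_right[simp]: "length x = 2^n \<Longrightarrow> cd_mult n x (cd_one n) = x" using mult_one by blast

lemma conj_mult_all:
  "\<forall>x y. length x = 2^n \<and> length y = 2^n \<longrightarrow> cd_conj n (cd_mult n x y) = cd_mult n (cd_conj n y) (cd_conj n x)"
proof (induction n)
  case 0
  show ?case
  proof (intro allI impI)
    fix x y :: "real list"
    assume "length x = 2^0 \<and> length y = 2^0"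
    then have "x = [hd x]" "y = [hd y]" using len1 by auto
    then obtain p q where "x = [p]" "y = [q]" by blast
    then show "cd_conj 0 (cd_mult 0 x y) = cd_mult 0 (cd_conj 0 y) (cd_conj 0 x)" by simp
  qed
next
  case (Suc n)
  show ?case
  proof (intro allI impI)
    fix x y :: "real list"
    assume "length x = 2^Suc n \<and> length y = 2^Suc n"
    then have lx: "length x = 2^Suc n" and ly: "length y = 2^Suc n" by auto
    obtain a b where x: "x = a@b" and la: "length a = 2^n" "length b = 2^n"
      using split_Suc[OF lx] by blast
    obtain c d where y: "y = c@d" and lc: "length c = 2^n" "length d = 2^n"
      using split_Suc[OF ly] by blast
    show "cd_conj (Suc n) (cd_mult (Suc n) x y) = cd_mult (Suc n) (cd_conj (Suc n) y) (cd_conj (Suc n) x)"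
      using la lc Suc.IH unfolding x y
      by (simp add: Let_def, intro conjI nth_equalityI, simp_all add: nth_append)
  qed
qed
lemma conj_mult[simp]: "length x = 2^n \<Longrightarrow> length y = 2^n \<Longrightarrow>
  cd_conj n (cd_mult n x y) = cd_mult n (cd_conj n y) (cd_conj n x)" using conj_mult_all by blast

lemma nth0_append[simp]: "length a = 2^n \<Longrightarrow> (a @ b) ! 0 = a ! 0"
  by (simp add: nth_append)

lemma re_conj[simp]: "length x = 2^n \<Longrightarrow> cd_conj n x ! 0 = x ! 0"
proof (induction n arbitrary: x)
  case 0 then show ?case by simp
next
  case (Suc n)
  obtain a b where x: "x = a@b" and la: "length a = 2^n" "length b = 2^n"
    using split_Suc[OF Suc.prems] by blast
  show ?case using la Suc.IH unfolding x by simp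
qed

lemma re_comm_all:
  "\<forall>x y. length x = 2^n \<and> length y = 2^n \<longrightarrow> cd_mult n x y ! 0 = cd_mult n y x ! 0"
proof (induction n)
  case 0
  then show ?case by simp
next
  case (Suc n)
  show ?case
  proof (intro allI impI)
    fix x y :: "real list"
    assume "length x = 2^Suc n \<and> length y = 2^Suc n"
    then have lx: "length x = 2^Suc n" and ly: "length y = 2^Suc n" by auto
    obtain a b where x: "x = a@b" and la: "length a = 2^n" "length b = 2^n"
      using split_Suc[OF lx] by blast
    obtain c d where y: "y = c@d" and lc: "length c = 2^n" "length d = 2^n"
      using split_Suc[OF ly] by blast
    have h: "cd_mult n (cd_conj n d) b ! 0 = cd_mult n (cd_conj n b) d ! 0"
    proof -
      have "cd_mult n (cd_conj n b) d ! 0 = cd_conj n (cd_mult n (cd_conj n d) b) ! 0"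
        using la lc by simp
      also have "\<dots> = cd_mult n (cd_conj n d) b ! 0" using la lc by (intro re_conj) simp
      finally show ?thesis by simp
    qed
    show "cd_mult (Suc n) x y ! 0 = cd_mult (Suc n) y x ! 0"
      using la lc Suc.IH h unfolding x y by simp
  qed
qed
lemma re_comm: "length x = 2^n \<Longrightarrow> length y = 2^n \<Longrightarrow> cd_mult n x y ! 0 = cd_mult n y x ! 0"
  using re_comm_all by blast

lemma re_assoc_all:
  "\<forall>x y z. length x = 2^n \<and> length y = 2^n \<and> length z = 2^n \<longrightarrow>
     cd_mult n (cd_mult n x y) z ! 0 = cd_mult n x (cd_mult n y z) ! 0"
proof (induction n)
  case 0
  then show ?case by simp
next
  case (Suc n)
  have IH: "\<And>x y z. length x = 2^n \<Longrightarrow> length y = 2^n \<Longrightarrow> length z = 2^n \<Longrightarrow>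
     cd_mult n (cd_mult n x y) z ! 0 = cd_mult n x (cd_mult n y z) ! 0"
    using Suc.IH by blast
  show ?case
  proof (intro allI impI)
    fix x y z :: "real list"
    assume "length x = 2^Suc n \<and> length y = 2^Suc n \<and> length z = 2^Suc n"
    then have lx: "length x = 2^Suc n" and ly: "length y = 2^Suc n" and lz: "length z = 2^Suc n" by auto
    obtain a b where x: "x = a@b" and la: "length a = 2^n" "length b = 2^n"
      using split_Suc[OF lx] by blast
    obtain c d where y: "y = c@d" and lc: "length c = 2^n" "length d = 2^n"
      using split_Suc[OF ly] by blast
    obtain e f where z: "z = e@f" and le: "length e = 2^n" "length f = 2^n"
      using split_Suc[OF lz] by blast
    note l = la lc le
    let ?m = "cd_mult n" and ?c = "cd_conj n"
    have h1: "?m (?m a c) e ! 0 = ?m a (?m c e) ! 0" using l IH by simp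
    have h2: "?m (?m (?c d) b) e ! 0 = ?m (?m e (?c d)) b ! 0"
    proof -
      have "?m (?m (?c d) b) e ! 0 = ?m (?c d) (?m b e) ! 0" using l IH by simp
      also have "\<dots> = ?m (?m b e) (?c d) ! 0" using l by (simp add: re_comm)
      also have "\<dots> = ?m b (?m e (?c d)) ! 0" using l IH by simp
      also have "\<dots> = ?m (?m e (?c d)) b ! 0" using l by (simp add: re_comm)
      finally show ?thesis .
    qed
    have h3: "?m (?c f) (?m d a) ! 0 = ?m a (?m (?c f) d) ! 0"
    proof -
      have "?m (?c f) (?m d a) ! 0 = ?m (?m (?c f) d) a ! 0" using l IH by simp
      also have "\<dots> = ?m a (?m (?c f) d) ! 0" using l by (simp add: re_comm)
      finally show ?thesis .
    qed
    have h4: "?m (?c f) (?m b (?c c)) ! 0 = ?m (?m (?c c) (?c f)) b ! 0"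
    proof -
      have "?m (?c f) (?m b (?c c)) ! 0 = ?m (?m (?c f) b) (?c c) ! 0" using l IH by simp
      also have "\<dots> = ?m (?c c) (?m (?c f) b) ! 0" using l by (simp add: re_comm)
      also have "\<dots> = ?m (?m (?c c) (?c f)) b ! 0" using l IH by simp
      finally show ?thesis .
    qed
    show "cd_mult (Suc n) (cd_mult (Suc n) x y) z ! 0 = cd_mult (Suc n) x (cd_mult (Suc n) y z) ! 0"
      using l unfolding x y z by (simp add: Let_def h1 h2 h3 h4)
  qed
qed
lemma re_assoc: "length x = 2^n \<Longrightarrow> length y = 2^n \<Longrightarrow> length z = 2^n \<Longrightarrow>
     cd_mult n (cd_mult n x y) z ! 0 = cd_mult n x (cd_mult n y z) ! 0"
  using re_assoc_all by blast

lemma inner_sum: "length x = length y \<Longrightarrow> cd_inner x y = (\<Sum>i<length x. x!i * y!i)"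
  by (simp add: cd_inner_def sum_list_sum_nth atLeast0LessThan)
lemma inner_append[simp]: "length a = length c \<Longrightarrow> cd_inner (a@b) (c@d) = cd_inner a c + cd_inner b d"
  by (simp add: cd_inner_def)
lemma inner_one: "length x = 2^n \<Longrightarrow> cd_inner x (cd_one n) = x!0"
proof -
  assume l: "length x = 2^n"
  have "cd_inner x (cd_one n) = (\<Sum>i<2^n. x!i * (if i = 0 then 1 else 0))"
    using l by (simp add: inner_sum nth_one)
  also have "\<dots> = (\<Sum>i<2^n. if i = 0 then x!i else 0)"
    by (intro sum.cong) auto
  also have "\<dots> = x!0" by (simp add: sum.delta)
  finally show ?thesis .
qed
lemma inner_add_left: "length x = length z \<Longrightarrow> length y = length z \<Longrightarrow>
  cd_inner (cd_add x y) z = cd_inner x z + cd_inner y z"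
  by (simp add: inner_sum algebra_simps sum.distrib)
lemma inner_scale_left: "length x = length z \<Longrightarrow>
  cd_inner (cd_scale c x) z = c * cd_inner x z"
  by (simp add: inner_sum sum_distrib_left mult.assoc)
lemma inner_neg_left: "length x = length z \<Longrightarrow>
  cd_inner (cd_neg x) z = - cd_inner x z"
  by (simp add: neg_scale inner_scale_left)
lemma inner_neg_right: "length x = length z \<Longrightarrow>
  cd_inner x (cd_neg z) = - cd_inner x z"
  by (simp add: inner_sum sum_negf)
lemma inner_zero_left: "length z = 2^n \<Longrightarrow> cd_inner (cd_zero n) z = 0"
  by (simp add: inner_sum)

lemma inner_mult: "length x = 2^n \<Longrightarrow> length y = 2^n \<Longrightarrow> cd_inner x y = cd_mult n x (cd_conj n y) ! 0"
proof (induction n arbitrary: x y)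
  case 0
  then have "x = [hd x]" "y = [hd y]" using len1 by auto
  then obtain p q where "x = [p]" "y = [q]" by blast
  then show ?case by (simp add: cd_inner_def)
next
  case (Suc n)
  obtain a b where x: "x = a@b" and la: "length a = 2^n" "length b = 2^n"
    using split_Suc[OF Suc.prems(1)] by blast
  obtain c d where y: "y = c@d" and lc: "length c = 2^n" "length d = 2^n"
    using split_Suc[OF Suc.prems(2)] by blast
  have "cd_inner b d = cd_mult n (cd_conj n d) b ! 0"
    using Suc.IH[of b d] la lc by (simp add: re_comm)
  then show ?case using Suc.IH[of a c] la lc unfolding x y by (simp add: Let_def)
qed

lemma trace_eq: "length x = 2^n \<Longrightarrow> cd_add x (cd_conj n x) = cd_scale (2 * x!0) (cd_one n)"
proof (induction n arbitrary: x)
  case 0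
  then have "x = [hd x]" using len1 by auto
  then obtain p where "x = [p]" by blast
  then show ?case by (simp add: one0 cd_add_def cd_scale_def)
next
  case (Suc n)
  obtain a b where x: "x = a@b" and la: "length a = 2^n" "length b = 2^n"
    using split_Suc[OF Suc.prems(1)] by blast
  show ?case using Suc.IH[of a] la unfolding x one_Suc
    by (simp, intro nth_equalityI, simp_all)
qed

lemma norm_eq: "length x = 2^n \<Longrightarrow> cd_mult n (cd_conj n x) x = cd_scale (cd_inner x x) (cd_one n)"
proof (induction n arbitrary: x)
  case 0
  then have "x = [hd x]" using len1 by auto
  then obtain p where "x = [p]" by blast
  then show ?case by (simp add: one0 cd_inner_def cd_scale_def)
next
  case (Suc n)
  obtain a b where x: "x = a@b" and la: "length a = 2^n" "length b = 2^n"
    using split_Suc[OF Suc.prems(1)] by blast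
  show ?case using Suc.IH[of a] Suc.IH[of b] la unfolding x one_Suc
    by (simp add: Let_def, intro conjI nth_equalityI, simp_all add: algebra_simps)
qed

lemma pderiv_prod_lin:
  fixes a :: "nat \<Rightarrow> complex"
  assumes "finite S" "\<forall>i\<in>S. z \<noteq> a i"
  shows "poly (pderiv (\<Prod>i\<in>S. [:-a i, 1:])) z = poly (\<Prod>i\<in>S. [:-a i, 1:]) z * (\<Sum>i\<in>S. 1 / (z - a i))"
  using assms
proof (induction S rule: finite_induct)
  case empty
  then show ?case by (simp add: pderiv_pCons)
next
  case (insert x F)
  have nz: "z - a x \<noteq> 0" using insert by auto
  define P where "P = (\<Prod>i\<in>F. [:-a i, 1:])"
  have d: "pderiv (\<Prod>i\<in>insert x F. [:-a i, 1:]) = P + [:-a x, 1:] * pderiv P"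
  proof -
    have e: "(\<Prod>i\<in>insert x F. [:-a i, 1:]) = [:-a x, 1:] * P" using insert by (simp add: P_def)
    have f: "pderiv [:-a x, 1:] = 1" by (simp add: pderiv_pCons)
    show ?thesis unfolding e by (simp only: pderiv_mult f mult_1_right) (rule add.commute)
  qed
  have "poly (pderiv (\<Prod>i\<in>insert x F. [:-a i, 1:])) z = poly P z + (z - a x) * poly (pderiv P) z"
    unfolding d by (simp add: algebra_simps)
  also have "\<dots> = poly P z + (z - a x) * (poly P z * (\<Sum>i\<in>F. 1 / (z - a i)))"
    using insert unfolding P_def by simp
  also have "\<dots> = (z - a x) * poly P z * (1 / (z - a x) + (\<Sum>i\<in>F. 1 / (z - a i)))"
    using nz by (simp add: field_simps)
  also have "(z - a x) * poly P z = poly (\<Prod>i\<in>insert x F. [:-a i, 1:]) z"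
    using insert by (simp add: P_def algebra_simps)
  also have "1 / (z - a x) + (\<Sum>i\<in>F. 1 / (z - a i)) = (\<Sum>i\<in>insert x F. 1 / (z - a i))"
    using insert by simp
  finally show ?case .
qed

lemma cnj_inv: fixes v :: complex assumes "v \<noteq> 0"
  shows "cnj (1 / v) = of_real (1 / (cmod v)^2) * v"
proof -
  have "of_real ((cmod v)^2) = v * cnj v" by (rule complex_norm_square)
  moreover have "cnj v \<noteq> 0" using assms by simp
  ultimately show ?thesis using assms by (simp add: field_simps)
qed

lemma gauss_lucas:
  fixes p :: "complex poly"
  assumes "degree p > 0" "poly (pderiv p) z = 0"
  shows "z \<in> convex hull {w. poly p w = 0}"
proof (cases "poly p z = 0")
  case True
  then show ?thesis by (simp add: hull_inc)
next
  case False
  obtain root where rt: "smult (lead_coeff p) (\<Prod>i<degree p. [:-root i, 1:]) = p"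
    using complex_poly_decompose' by blast
  define Q where "Q = (\<Prod>i<degree p. [:-root i, 1:])"
  have p0: "p \<noteq> 0" using assms by auto
  have lc: "lead_coeff p \<noteq> 0" using p0 by simp
  have pQ: "p = smult (lead_coeff p) Q" using rt Q_def by simp
  have roots: "poly p (root i) = 0" if "i < degree p" for i
  proof -
    have "poly Q (root i) = 0" unfolding Q_def poly_prod
      using that by (intro prod_zero) auto
    then show ?thesis by (subst pQ) simp
  qed
  have Qz: "poly Q z \<noteq> 0"
  proof
    assume "poly Q z = 0"
    then have "poly p z = 0" by (subst pQ) simp
    with False show False by simp
  qed
  have ne: "\<forall>i\<in>{..<degree p}. z \<noteq> root i"
    using roots False by auto
  have "poly (pderiv p) z = lead_coeff p * (poly Q z * (\<Sum>i<degree p. 1 / (z - root i)))"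
    by (subst pQ) (simp add: pderiv_smult Q_def pderiv_prod_lin[OF _ ne])
  with assms(2) lc Qz have s0: "(\<Sum>i<degree p. 1 / (z - root i)) = 0" by simp
  define w where "w i = 1 / (cmod (z - root i))^2" for i
  have wpos: "w i > 0" if "i < degree p" for i
    using ne that by (simp add: w_def)
  have "cnj (\<Sum>i<degree p. 1 / (z - root i)) = (\<Sum>i<degree p. of_real (w i) * (z - root i))"
    unfolding cnj_sum
  proof (intro sum.cong refl)
    fix i assume "i \<in> {..<degree p}"
    then have "z - root i \<noteq> 0" using ne by auto
    then show "cnj (1 / (z - root i)) = of_real (w i) * (z - root i)"
      unfolding w_def by (rule cnj_inv)
  qed
  with s0 have s1: "(\<Sum>i<degree p. of_real (w i) * (z - root i)) = 0" by simp
  define W where "W = (\<Sum>i<degree p. w i)"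
  have Wpos: "W > 0" unfolding W_def
    using assms(1) wpos by (intro sum_pos) auto
  have "of_real W * z = (\<Sum>i<degree p. of_real (w i) * root i)"
    using s1 by (simp add: W_def algebra_simps sum_subtractf sum_distrib_left of_real_sum)
  then have zeq: "z = (\<Sum>i<degree p. (w i / W) *\<^sub>R root i)"
    using Wpos by (simp add: scaleR_conv_of_real sum_distrib_left[symmetric] field_simps sum_divide_distrib[symmetric] divide_simps)
  show ?thesis
    unfolding zeq
  proof (rule convex_sum)
    show "(\<Sum>i<degree p. w i / W) = 1" using Wpos by (simp add: W_def sum_divide_distrib[symmetric])
    show "\<And>i. i \<in> {..<degree p} \<Longrightarrow> 0 \<le> w i / W" using wpos Wpos by (simp add: less_imp_le)
    show "\<And>i. i \<in> {..<degree p} \<Longrightarrow> root i \<in> convex hull {w. poly p w = 0}"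
      using roots by (simp add: hull_inc)
  qed auto
qed

context
  fixes n :: nat and J :: "real list"
  assumes lJ: "length J = 2^n" and J0: "J!0 = 0" and JJ1: "cd_inner J J = 1"
begin

lemma conjJ: "cd_conj n J = cd_neg J"
proof -
  have t: "cd_add J (cd_conj n J) = cd_scale 0 (cd_one n)" using trace_eq[OF lJ] J0 by simp
  show ?thesis
  proof (rule nth_equalityI)
    show "length (cd_conj n J) = length (cd_neg J)" using lJ by simp
    fix i assume "i < length (cd_conj n J)"
    then have i: "i < 2^n" using lJ by simp
    have "cd_add J (cd_conj n J) ! i = cd_scale 0 (cd_one n) ! i" using t by simp
    then show "cd_conj n J ! i = cd_neg J ! i" using i lJ by simp
  qed
qed

lemma J_unit: "J \<in> cd_units n"
proof -
  have "cd_trace n J = cd_zero n"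
    unfolding cd_trace_def using trace_eq[OF lJ] J0 lJ by (simp, intro nth_equalityI, simp_all)
  moreover have "cd_norm n J = cd_one n"
    unfolding cd_norm_def using norm_eq[OF lJ] JJ1 by (simp, intro nth_equalityI, simp_all)
  ultimately show ?thesis using lJ by (simp add: cd_units_def cd_carrier_def)
qed

lemma JJ: "cd_mult n J J = cd_neg (cd_one n)"
proof -
  have "cd_mult n (cd_conj n J) J = cd_one n" using norm_eq[OF lJ] JJ1 by (simp, intro nth_equalityI, simp_all)
  then have "cd_neg (cd_mult n J J) = cd_one n" using lJ by (simp add: conjJ)
  then show ?thesis by (metis neg_neg)
qed

lemma K1: "length x = 2^n \<Longrightarrow> cd_inner (cd_mult n x J) (cd_one n) = - cd_inner x J"
  using lJ by (simp add: inner_one inner_mult conjJ)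

lemma K2: "length x = 2^n \<Longrightarrow> cd_inner (cd_mult n x J) J = cd_inner x (cd_one n)"
proof -
  assume l: "length x = 2^n"
  have "cd_inner (cd_mult n x J) J = - (cd_mult n (cd_mult n x J) J ! 0)"
    using l lJ by (simp add: inner_mult conjJ)
  also have "\<dots> = - (cd_mult n x (cd_mult n J J) ! 0)" using l lJ by (simp add: re_assoc)
  also have "\<dots> = x ! 0" using l lJ by (simp add: JJ nth_one)
  finally show ?thesis using l by (simp add: inner_one)
qed

lemma len_embed[simp]: "length (cd_embed n J z) = 2^n"
  using lJ by (simp add: cd_embed_def)

lemma embed_mult: "cd_mult n (cd_embed n J z) (cd_embed n J w) = cd_embed n J (z * w)"
  using lJ unfolding cd_embed_def
  by (simp add: JJ, intro nth_equalityI, simp_all add: algebra_simps)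

lemma embed_pow: "cd_pow n (cd_embed n J z) k = cd_embed n J (z ^ k)"
proof (induction k)
  case 0
  then show ?case using lJ unfolding cd_embed_def by (simp, intro nth_equalityI, simp_all)
next
  case (Suc k)
  then show ?case by (simp add: embed_mult)
qed

lemma proj_add: "length x = 2^n \<Longrightarrow> length y = 2^n \<Longrightarrow>
  cd_proj_coord n J (cd_add x y) = cd_proj_coord n J x + cd_proj_coord n J y"
  using lJ by (simp add: cd_proj_coord_def inner_add_left complex_eq_iff)

lemma proj_scale: "length x = 2^n \<Longrightarrow>
  cd_proj_coord n J (cd_scale c x) = of_real c * cd_proj_coord n J x"
  using lJ by (simp add: cd_proj_coord_def inner_scale_left complex_eq_iff)

lemma proj_zero: "cd_proj_coord n J (cd_zero n) = 0"
  using lJ by (simp add: cd_proj_coord_def inner_zero_left complex_eq_iff)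

lemma proj_mult_embed: "length x = 2^n \<Longrightarrow>
  cd_proj_coord n J (cd_mult n x (cd_embed n J w)) = cd_proj_coord n J x * w"
proof -
  assume l: "length x = 2^n"
  have "cd_mult n x (cd_embed n J w) = cd_add (cd_scale (Re w) x) (cd_scale (Im w) (cd_mult n x J))"
    using l lJ unfolding cd_embed_def by simp
  then show ?thesis using l lJ
    by (simp add: cd_proj_coord_def inner_add_left inner_scale_left K1 K2 complex_eq_iff algebra_simps)
qed

lemma proj_foldr: "\<forall>y\<in>set ys. length y = 2^n \<Longrightarrow>
  length (foldr cd_add ys (cd_zero n)) = 2^n \<and>
  cd_proj_coord n J (foldr cd_add ys (cd_zero n)) = sum_list (map (cd_proj_coord n J) ys)"
  by (induction ys) (simp_all add: proj_zero proj_add)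

lemma proj_eval: "\<forall>g\<in>set gs. length g = 2^n \<Longrightarrow>
  cd_proj_coord n J (cd_eval n gs (cd_embed n J z)) = (\<Sum>k<length gs. cd_proj_coord n J (gs!k) * z^k)"
proof -
  assume g: "\<forall>g\<in>set gs. length g = 2^n"
  have "cd_proj_coord n J (cd_eval n gs (cd_embed n J z))
     = sum_list (map (cd_proj_coord n J) (map (\<lambda>k. cd_mult n (gs ! k) (cd_pow n (cd_embed n J z) k)) [0..<length gs]))"
    unfolding cd_eval_def by (rule conjunct2[OF proj_foldr]) simp
  also have "\<dots> = sum_list (map (\<lambda>k. cd_proj_coord n J (gs!k) * z^k) [0..<length gs])"
    using g by (intro arg_cong[where f=sum_list] map_cong refl) (simp add: embed_pow proj_mult_embed)
  also have "\<dots> = (\<Sum>k<length gs. cd_proj_coord n J (gs!k) * z^k)"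
    by (simp add: sum_list_sum_nth atLeast0LessThan)
  finally show ?thesis .
qed

end

lemma poly_Poly_sum: "poly (Poly xs) (z::complex) = (\<Sum>k<length xs. xs!k * z^k)"
proof (induction xs)
  case Nil then show ?case by simp
next
  case (Cons a xs)
  have "(\<Sum>k<length (a#xs). (a#xs)!k * z^k) = a + (\<Sum>k<length xs. xs!k * z^(Suc k))"
    unfolding length_Cons sum.lessThan_Suc_shift by (simp add: algebra_simps)
  also have "\<dots> = a + z * (\<Sum>k<length xs. xs!k * z^k)"
    by (simp add: sum_distrib_left algebra_simps)
  finally show ?case using Cons by simp
qed

lemma decompose:
  assumes n1: "n \<ge> 1" and lr: "length r = 2^n"
  obtains J z where "length J = 2^n" "J!0 = 0" "cd_inner J J = 1" "r = cd_embed n J z"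
proof -
  define v where "v = cd_add r (cd_scale (- (r!0)) (cd_one n))"
  have lv: "length v = 2^n" using lr by (simp add: v_def)
  have v0: "v!0 = 0" using lr by (simp add: v_def nth_one)
  show ?thesis
  proof (cases "\<forall>i<2^n. v!i = 0")
    case True
    define e where "e = (cd_zero n)[1 := 1]"
    have "(2::nat)^1 \<le> 2^n" using n1 by (intro power_increasing) simp_all
    then have two: "1 < (2::nat)^n" by simp
    have le: "length e = 2^n" by (simp add: e_def)
    have e0: "e!0 = 0" using two by (simp add: e_def)
    have ee: "cd_inner e e = 1"
    proof -
      have "cd_inner e e = (\<Sum>i<(2::nat)^n. e!i * e!i)" using le by (simp add: inner_sum)
      also have "\<dots> = (\<Sum>i<(2::nat)^n. if i = 1 then 1 else (0::real))"
        by (rule sum.cong) (auto simp: e_def nth_list_update)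
      also have "\<dots> = 1" using two by (simp add: sum.delta)
      finally show ?thesis .
    qed
    have "r = cd_embed n e (Complex (r!0) 0)"
    proof (rule nth_equalityI)
      show "length r = length (cd_embed n e (Complex (r!0) 0))" using lr le by (simp add: cd_embed_def)
      fix i assume "i < length r"
      then have i: "i < 2^n" using lr by simp
      have "v!i = 0" using True i by simp
      then show "r ! i = cd_embed n e (Complex (r!0) 0) ! i"
        using i lr le by (simp add: cd_embed_def v_def)
    qed
    then show ?thesis using that le e0 ee by blast
  next
    case False
    then obtain j where j: "j < 2^n" "v!j \<noteq> 0" by blast
    have sq: "0 < v!j * v!j" using j(2) not_real_square_gt_zero by blast
    have pos: "cd_inner v v > 0"
    proof -
      have "cd_inner v v = (\<Sum>i<2^n. v!i * v!i)" using lv by (simp add: inner_sum)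
      also have "\<dots> > 0"
        using j sq by (intro sum_pos2[of _ j]) auto
      finally show ?thesis .
    qed
    define s where "s = sqrt (cd_inner v v)"
    have spos: "s > 0" using pos by (simp add: s_def)
    have ss: "s * s = cd_inner v v" using pos by (simp add: s_def)
    define J where "J = cd_scale (1/s) v"
    have lJ: "length J = 2^n" using lv by (simp add: J_def)
    have J0: "J!0 = 0" using lv v0 by (simp add: J_def)
    have JJ: "cd_inner J J = 1"
    proof -
      have "cd_inner J J = (1/s) * ((1/s) * cd_inner v v)"
        using lv unfolding J_def by (simp add: inner_sum sum_distrib_left algebra_simps)
      then show ?thesis using ss spos pos by (simp add: field_simps)
    qed
    have "r = cd_embed n J (Complex (r!0) s)"
    proof (rule nth_equalityI)
      show "length r = length (cd_embed n J (Complex (r!0) s))" using lr lJ by (simp add: cd_embed_def)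
      fix i assume "i < length r"
      then have i: "i < 2^n" using lr by simp
      then show "r ! i = cd_embed n J (Complex (r!0) s) ! i"
        using i lr lJ lv spos by (simp add: cd_embed_def J_def v_def)
    qed
    then show ?thesis using that lJ J0 JJ by blast
  qed
qed

lemma pderiv_fI:
  assumes "\<forall>a \<in> set fs. length a = 2^n" "length J = 2^n" "J!0 = 0" "cd_inner J J = 1"
  shows "pderiv (cd_fI n J fs) = Poly (map (cd_proj_coord n J) (cd_pderiv fs))"
proof (rule poly_eqI)
  fix i
  show "coeff (pderiv (cd_fI n J fs)) i = coeff (Poly (map (cd_proj_coord n J) (cd_pderiv fs))) i"
  proof (cases "Suc i < length fs")
    case True
    have l: "length (fs ! Suc i) = 2^n" using assms(1) True by simp
    show ?thesis using True l assms(2-4)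
      by (simp add: coeff_pderiv cd_fI_def cd_pderiv_def nth_default_def proj_scale)
  next
    case False
    then show ?thesis
      by (simp add: coeff_pderiv cd_fI_def cd_pderiv_def nth_default_def)
  qed
qed

theorem theorem4p8:
  fixes n :: nat and fs :: "real list list" and r :: "real list"
  assumes "n \<ge> 1"
    and "\<forall>a \<in> set fs. a \<in> cd_carrier n"
    and "r \<in> cd_carrier n"
    and "cd_eval n (cd_pderiv fs) r = cd_zero n"
  shows "r \<in> cd_snail n fs"
proof -
  have lr: "length r = 2^n" using assms(3) by (simp add: cd_carrier_def)
  have lfs: "\<forall>a\<in>set fs. length a = 2^n" using assms(2) by (simp add: cd_carrier_def)
  obtain J z where lJ: "length J = 2^n" and J0: "J!0 = 0" and JJ1: "cd_inner J J = 1"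
      and rz: "r = cd_embed n J z"
    using decompose[OF assms(1) lr] by blast
  have lgs: "\<forall>g\<in>set (cd_pderiv fs). length g = 2^n" using lfs by (auto simp: cd_pderiv_def)
  have "0 = cd_proj_coord n J (cd_eval n (cd_pderiv fs) r)"
    using assms(4) proj_zero[OF lJ J0 JJ1] by simp
  also have "\<dots> = (\<Sum>k<length (cd_pderiv fs). cd_proj_coord n J (cd_pderiv fs ! k) * z^k)"
    unfolding rz by (rule proj_eval[OF lJ J0 JJ1 lgs])
  also have "\<dots> = poly (Poly (map (cd_proj_coord n J) (cd_pderiv fs))) z"
    by (auto simp: poly_Poly_sum intro!: sum.cong)
  also have "\<dots> = poly (pderiv (cd_fI n J fs)) z"
    using pderiv_fI[OF lfs lJ J0 JJ1] by simp
  finally have d0: "poly (pderiv (cd_fI n J fs)) z = 0" by simp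
  have "r \<in> cd_K n J fs"
  proof (cases "degree (cd_fI n J fs) > 0")
    case True
    then have "z \<in> convex hull {w. poly (cd_fI n J fs) w = 0}" using gauss_lucas d0 by blast
    then show ?thesis using True unfolding cd_K_def rz by simp
  next
    case False
    then show ?thesis unfolding cd_K_def rz by simp
  qed
  then show ?thesis using J_unit[OF lJ J0 JJ1] unfolding cd_snail_def by blast
qed

end
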